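(* Let $n\ge1$, $P(x)=\frac{c_n}{(1+|x|^2)^{\frac{n+1}{2}}}$ with $c_n$ chosen so that $\int_{\mathbb{R}^n}P=1$, and $\mathcal{M}_P(\mu)(x)=\sup_{r>0}P_r*\mu(x)$ where $P_r(x)=r^{-n}P(x/r)$. Then for every finite positive measure $V$ on $\mathbb{R}^n$ absolutely continuous with respect to Lebesgue measure and every fixed $\rho>0$, $$\lim_{t\to0^+}\Big\|\mathcal{M}_P(V_t)(x)-\frac{c_n n^{\frac n2}}{(1+n)^{\frac{n+1}{2}}}\,\frac{V(\mathbb{R}^n)}{|x|^n}\Big\|_{L^{1,\infty}(\mathbb{R}^n\setminus B(0,\rho),\,dx)}=0.$$
   Context: $P_r*\mu(x)=\int_{\mathbb{R}^n}P_r(x-y)\,d\mu(y)$. $V_t(E)=V(E/t)$ with $E/t=\{x/t:x\in E\}$. For a measurable set $E$, $\|f\|_{L^{1,\infty}(E)}=\sup_{\lambda>0}\lambda|\{x\in E:|f(x)|>\lambda\}|$. *)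

theory Defs
  imports "HOL-Analysis.Analysis"
begin

definition pk_const :: "'a::euclidean_space itself \<Rightarrow> real" where
  "pk_const _ = 1 / (\<integral>x. 1 / (1 + (norm (x::'a))\<^sup>2) powr ((real DIM('a) + 1) / 2) \<partial>lborel)"

definition poisson_kernel :: "'a::euclidean_space \<Rightarrow> real" where
  "poisson_kernel x = pk_const TYPE('a) / (1 + (norm x)\<^sup>2) powr ((real DIM('a) + 1) / 2)"

definition poisson_dil :: "real \<Rightarrow> 'a::euclidean_space \<Rightarrow> real" where
  "poisson_dil r x = r powr (- real DIM('a)) * poisson_kernel (x /\<^sub>R r)"

definition poisson_conv :: "real \<Rightarrow> 'a::euclidean_space measure \<Rightarrow> 'a \<Rightarrow> ennreal" where
  "poisson_conv r \<mu> x = (\<integral>\<^sup>+ y. ennreal (poisson_dil r (x - y)) \<partial>\<mu>)"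

definition max_poisson :: "'a::euclidean_space measure \<Rightarrow> 'a \<Rightarrow> ennreal" where
  "max_poisson \<mu> x = (SUP r\<in>{0<..}. poisson_conv r \<mu> x)"

text \<open>V_t(E) = V(E/t), i.e. the push-forward of V under y \<mapsto> t y.\<close>
definition meas_dilate :: "real \<Rightarrow> 'a::euclidean_space measure \<Rightarrow> 'a measure" where
  "meas_dilate t V = distr V borel (\<lambda>y. t *\<^sub>R y)"

definition weak_L1_norm :: "'a::euclidean_space set \<Rightarrow> ('a \<Rightarrow> real) \<Rightarrow> ennreal" where
  "weak_L1_norm E f = (SUP s\<in>{0::real<..}. ennreal s * emeasure lebesgue {x\<in>E. \<bar>f x\<bar> > s})"

end

theory Submission
  imports Defs
begin


lemma sq_powr:
  fixes y :: real and n :: nat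
  assumes "y \<ge> 0"
  shows "(y powr ((real n + 1)/2))^2 = y^(n+1)"
proof (cases "y = 0")
  case True then show ?thesis by simp
next
  case False
  then have "y > 0" using assms by simp
  have e: "of_nat 2 * ((real n + 1)/2) = real (n+1)" by simp
  have "(y powr ((real n + 1)/2))^2 = y powr (of_nat 2 * ((real n + 1)/2))"
    using False by (rule powr_power)
  also have "\<dots> = y powr (real (n+1))" by (simp only: e)
  also have "\<dots> = y^(n+1)" using \<open>y>0\<close> by (rule powr_realpow)
  finally show ?thesis .
qed

lemma sq_powr_half:
  fixes n :: nat
  assumes "n \<ge> 1"
  shows "(real n powr (real n / 2))^2 = real n ^ n"
proof (cases "n = 0")
  case True then show ?thesis using assms by simp
next
  case False
  have "(real n powr (real n / 2))^2 = real n powr (real n / 2 * 2)"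
    using powr_power[of "real n" "real n/2" 2] False by simp
  also have "\<dots> = real n ^ n" using False by (simp add: powr_realpow)
  finally show ?thesis .
qed

lemma bern_key:
  fixes u :: real and n :: nat
  assumes "n \<ge> 1" "u \<ge> 0"
  shows "(real n + 1)^(n+1) * u \<le> real n ^ n * (1 + u)^(n+1)"
proof -
  define x where "x = (real n * u - 1) / (real n + 1)"
  have "real n * u \<ge> 0" using assms by simp
  then have "-1 \<le> x" unfolding x_def by (simp add: field_simps)
  then have b: "1 + real (n+1) * x \<le> (1 + x)^(n+1)" by (rule Bernoulli_inequality)
  have e1: "1 + real (n+1) * x = real n * u" unfolding x_def by (simp add: field_simps)
  have np: "real n > 0" using assms by simp
  have "1 + x = real n * (1+u) / (real n + 1)" unfolding x_def by (simp add: field_simps)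
  then have e2: "1 + u = ((real n + 1) / real n) * (1 + x)" using np by simp
  have "(1 + u)^(n+1) = ((real n + 1) / real n)^(n+1) * (1+x)^(n+1)"
    unfolding e2 by (rule power_mult_distrib)
  then have "real n ^ n * (1 + u)^(n+1) = real n ^ n * ((real n + 1) / real n)^(n+1) * (1+x)^(n+1)"
    by simp
  also have "real n ^ n * ((real n + 1) / real n)^(n+1) = (real n + 1)^(n+1) / real n"
    using assms by (simp add: power_divide field_simps)
  finally have "real n ^ n * (1 + u)^(n+1) = (real n + 1)^(n+1) / real n * (1+x)^(n+1)" .
  moreover have "(real n + 1)^(n+1) / real n * (real n * u) \<le> (real n + 1)^(n+1) / real n * (1+x)^(n+1)"
    using b e1 by (intro mult_left_mono) auto
  moreover have "(real n + 1)^(n+1) / real n * (real n * u) = (real n + 1)^(n+1) * u"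
    using assms by simp
  ultimately show ?thesis by linarith
qed

lemma phi_le:
  fixes n :: nat and r a :: real
  assumes n: "n \<ge> 1" and r: "r > 0" and a: "a > 0"
  shows "r / (r^2 + a^2) powr ((real n + 1)/2) \<le> real n powr (real n / 2) / (1 + real n) powr ((real n + 1)/2) / a^n"
proof -
  define P where "P = (r^2 + a^2) powr ((real n + 1)/2)"
  define Q where "Q = (1 + real n) powr ((real n + 1)/2)"
  define N where "N = real n powr (real n / 2)"
  have P: "P > 0" unfolding P_def using r by simp
  have Q: "Q > 0" unfolding Q_def by simp
  have N: "N > 0" unfolding N_def using n by simp
  have P2: "P^2 = (r^2+a^2)^(n+1)" unfolding P_def by (rule sq_powr) simp
  have Q2: "Q^2 = (1 + real n)^(n+1)" unfolding Q_def by (rule sq_powr) simp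
  have N2: "N^2 = real n ^ n" unfolding N_def using n by (rule sq_powr_half)
  have bk: "(real n + 1)^(n+1) * (r^2/a^2) \<le> real n ^ n * (1 + r^2/a^2)^(n+1)"
    using n by (intro bern_key) auto
  have ineq1: "(real n + 1)^(n+1) * (r^2/a^2) * (a^2)^(n+1) \<le> real n ^ n * (1 + r^2/a^2)^(n+1) * (a^2)^(n+1)"
    using bk by (intro mult_right_mono) auto
  have eqA: "(real n + 1)^(n+1) * (r^2/a^2) * (a^2)^(n+1) = (real n + 1)^(n+1) * r^2 * (a^2)^n"
    using a by (simp add: field_simps)
  have "(1 + r^2/a^2) * a^2 = r^2 + a^2" using a by (simp add: field_simps)
  then have "(1 + r^2/a^2)^(n+1) * (a^2)^(n+1) = (r^2 + a^2)^(n+1)"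
    by (metis power_mult_distrib)
  then have eqB: "real n ^ n * (1 + r^2/a^2)^(n+1) * (a^2)^(n+1) = real n ^ n * (r^2 + a^2)^(n+1)"
    by (simp add: mult.assoc)
  have f1: "(real n + 1)^(n+1) * r^2 * (a^2)^n \<le> real n ^ n * (r^2 + a^2)^(n+1)"
    using ineq1 unfolding eqA eqB .
  have eqL: "(r * Q * a^n)^2 = (real n + 1)^(n+1) * r^2 * (a^2)^n"
    unfolding power_mult_distrib Q2 by (simp add: power_mult[symmetric] mult.commute add.commute)
  have eqR: "(N * P)^2 = real n ^ n * (r^2 + a^2)^(n+1)"
    unfolding power_mult_distrib N2 P2 by simp
  have sq: "(r * Q * a^n)^2 \<le> (N * P)^2"
    unfolding eqL eqR by (rule f1)
  have "r * Q * a^n \<le> N * P"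
    by (rule power2_le_imp_le[OF sq]) (use N P in simp)
  then show ?thesis unfolding P_def[symmetric] Q_def[symmetric] N_def[symmetric]
    using P Q a by (simp add: field_simps)
qed

lemma phi_eq:
  fixes n :: nat and a :: real
  assumes n: "n \<ge> 1" and a: "a > 0"
  shows "(a / sqrt n) / ((a / sqrt n)^2 + a^2) powr ((real n + 1)/2) = real n powr (real n / 2) / (1 + real n) powr ((real n + 1)/2) / a^n"
proof -
  define r where "r = a / sqrt n"
  have r: "r > 0" unfolding r_def using a n by simp
  have r2: "r^2 = a^2 / real n" unfolding r_def using n by (simp add: power_divide)
  define P where "P = (r^2 + a^2) powr ((real n + 1)/2)"
  define Q where "Q = (1 + real n) powr ((real n + 1)/2)"
  define N where "N = real n powr (real n / 2)"
  have P: "P > 0" unfolding P_def using r by simp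
  have Q: "Q > 0" unfolding Q_def by simp
  have N: "N > 0" unfolding N_def using n by simp
  have P2: "P^2 = (r^2+a^2)^(n+1)" unfolding P_def by (rule sq_powr) simp
  have Q2: "Q^2 = (1 + real n)^(n+1)" unfolding Q_def by (rule sq_powr) simp
  have N2: "N^2 = real n ^ n" unfolding N_def using n by (rule sq_powr_half)
  have "r^2 + a^2 = a^2 * (1 + real n) / real n" using r2 n by (simp add: field_simps)
  then have "(N * P)^2 = real n ^ n * (a^2 * (1 + real n) / real n)^(n+1)"
    by (simp add: power_mult_distrib N2 P2)
  also have "\<dots> = real n ^ n * ((a^2)^(n+1) * (1 + real n)^(n+1) / real n ^ (n+1))"
    by (simp add: power_divide power_mult_distrib)
  also have "\<dots> = (a^2)^(n+1) * (1 + real n)^(n+1) / real n"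
    using n by (simp add: field_simps)
  also have "\<dots> = (r * Q * a^n)^2"
    using n by (simp add: power_mult_distrib Q2 r2 field_simps flip: power_mult)
  finally have sq: "(r * Q * a^n)^2 = (N * P)^2" by simp
  have "r * Q * a^n = N * P"
  proof (rule power2_eq_imp_eq[OF sq])
    show "0 \<le> r * Q * a^n" using r Q a by simp
    show "0 \<le> N * P" using N P by simp
  qed
  then show ?thesis unfolding r_def[symmetric] P_def[symmetric] Q_def[symmetric] N_def[symmetric]
    using P Q a by (simp add: field_simps)
qed



definition pk_C0 :: "'a::euclidean_space itself \<Rightarrow> real" where
  "pk_C0 _ = pk_const TYPE('a) * real DIM('a) powr (real DIM('a) / 2) / (1 + real DIM('a)) powr ((real DIM('a) + 1) / 2)"

lemma sq_powr_nonneg: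
  fixes b :: real and n :: nat
  assumes b: "b \<ge> 0"
  shows "(b^2) powr ((real n + 1)/2) = b^(n+1)"
proof -
  have "(b^2) powr ((real n + 1)/2) = (b*b) powr ((real n + 1)/2)" by (simp only: power2_eq_square)
  also have "\<dots> = b powr ((real n + 1)/2) * b powr ((real n + 1)/2)" by (rule powr_mult)
  also have "\<dots> = (b powr ((real n + 1)/2))^2" by (simp only: power2_eq_square)
  also have "\<dots> = b^(n+1)" using b by (rule sq_powr)
  finally show ?thesis .
qed

lemma pk_const_nonneg: "pk_const TYPE('a::euclidean_space) \<ge> 0"
  unfolding pk_const_def
  by (intro divide_nonneg_nonneg integral_nonneg_AE) auto

lemma pk_C0_nonneg: "pk_C0 TYPE('a::euclidean_space) \<ge> 0"
  unfolding pk_C0_def using pk_const_nonneg[where 'a='a] by simp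

lemma K_formula:
  fixes z :: "'a::euclidean_space"
  assumes r: "r > 0"
  shows "poisson_dil r z = pk_const TYPE('a) * (r / (r^2 + (norm z)^2) powr ((real DIM('a) + 1)/2))"
proof -
  define p where "p = (real DIM('a) + 1)/2"
  define n where "n = DIM('a)"
  have "1 + (norm (z /\<^sub>R r))^2 = (r^2 + (norm z)^2) / r^2"
    using r by (simp add: field_simps power_divide)
  then have "(1 + (norm (z /\<^sub>R r))^2) powr p = (r^2 + (norm z)^2) powr p / (r^2) powr p"
    by (simp add: powr_divide)
  also have "(r^2) powr p = r^(n+1)" unfolding p_def n_def using r by (intro sq_powr_nonneg) simp
  finally have e: "(1 + (norm (z /\<^sub>R r))^2) powr p = (r^2 + (norm z)^2) powr p / r^(n+1)" .
  have rn: "r powr (- real n) = 1 / r^n" using r by (simp add: powr_minus powr_realpow divide_inverse)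
  have "poisson_dil r z = r powr (- real n) * (pk_const TYPE('a) / (1 + (norm (z /\<^sub>R r))^2) powr p)"
    unfolding poisson_dil_def poisson_kernel_def p_def n_def by simp
  also have "\<dots> = pk_const TYPE('a) * (r / (r^2 + (norm z)^2) powr p)"
    unfolding e rn using r by (simp add: field_simps)
  finally show ?thesis unfolding p_def .
qed

lemma K_nonneg:
  fixes z :: "'a::euclidean_space"
  assumes r: "r > 0"
  shows "poisson_dil r z \<ge> 0"
  unfolding K_formula[OF r] using r pk_const_nonneg[where 'a='a] by simp

lemma K_le:
  fixes z :: "'a::euclidean_space"
  assumes r: "r > 0" and z: "z \<noteq> 0"
  shows "poisson_dil r z \<le> pk_C0 TYPE('a) / (norm z)^DIM('a)"
proof -
  have "r / (r^2 + (norm z)^2) powr ((real DIM('a) + 1)/2) \<le> real DIM('a) powr (real DIM('a) / 2) / (1 + real DIM('a)) powr ((real DIM('a) + 1)/2) / (norm z)^DIM('a)"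
    using r z by (intro phi_le) (auto simp: DIM_positive Suc_le_eq)
  then have "pk_const TYPE('a) * (r / (r^2 + (norm z)^2) powr ((real DIM('a) + 1)/2)) \<le> pk_const TYPE('a) * (real DIM('a) powr (real DIM('a) / 2) / (1 + real DIM('a)) powr ((real DIM('a) + 1)/2) / (norm z)^DIM('a))"
    by (rule mult_left_mono[OF _ pk_const_nonneg])
  then show ?thesis unfolding K_formula[OF r] pk_C0_def by simp
qed

lemma K_eq:
  fixes x :: "'a::euclidean_space"
  assumes x: "x \<noteq> 0"
  shows "poisson_dil (norm x / sqrt DIM('a)) x = pk_C0 TYPE('a) / (norm x)^DIM('a)"
proof -
  have r: "norm x / sqrt DIM('a) > 0" using x by simp
  have "(norm x / sqrt DIM('a)) / ((norm x / sqrt DIM('a))^2 + (norm x)^2) powr ((real DIM('a) + 1)/2) = real DIM('a) powr (real DIM('a) / 2) / (1 + real DIM('a)) powr ((real DIM('a) + 1)/2) / (norm x)^DIM('a)"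
    using x by (intro phi_eq) (auto simp: DIM_positive Suc_le_eq)
  then show ?thesis unfolding K_formula[OF r] pk_C0_def by simp
qed

lemma K_mono:
  fixes z w :: "'a::euclidean_space"
  assumes r: "r > 0" and le: "norm w \<le> norm z"
  shows "poisson_dil r z \<le> poisson_dil r w"
proof -
  have "(r^2 + (norm w)^2) powr ((real DIM('a) + 1)/2) \<le> (r^2 + (norm z)^2) powr ((real DIM('a) + 1)/2)"
    using le by (intro powr_mono2) (auto intro: power_mono)
  moreover have "(r^2 + (norm w)^2) powr ((real DIM('a) + 1)/2) > 0" using r by simp
  ultimately have "r / (r^2 + (norm z)^2) powr ((real DIM('a) + 1)/2) \<le> r / (r^2 + (norm w)^2) powr ((real DIM('a) + 1)/2)"
    using r by (intro divide_left_mono) auto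
  then show ?thesis unfolding K_formula[OF r]
    using pk_const_nonneg[where 'a='a] by (intro mult_left_mono) auto
qed

lemma K_scale_lower:
  fixes z x :: "'a::euclidean_space"
  assumes r: "r > 0" and d: "d \<ge> 0" and le: "norm z \<le> (1 + d) * norm x"
  shows "poisson_dil r x / (1 + d)^(DIM('a)+1) \<le> poisson_dil r z"
proof -
  define p where "p = (real DIM('a) + 1)/2"
  have "(norm z)^2 \<le> ((1 + d) * norm x)^2" using le by (intro power_mono) auto
  moreover have "1 * r^2 \<le> (1+d)^2 * r^2"
    using d by (intro mult_right_mono one_le_power) auto
  moreover have "(1+d)^2 * (r^2 + (norm x)^2) = (1+d)^2 * r^2 + ((1 + d) * norm x)^2"
    by (simp add: power2_eq_square algebra_simps)
  ultimately have "r^2 + (norm z)^2 \<le> (1+d)^2 * (r^2 + (norm x)^2)"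
    by linarith
  then have "(r^2 + (norm z)^2) powr p \<le> ((1+d)^2 * (r^2 + (norm x)^2)) powr p"
    unfolding p_def by (intro powr_mono2) auto
  also have "\<dots> = (1+d)^(DIM('a)+1) * (r^2 + (norm x)^2) powr p"
    unfolding powr_mult p_def using d by (subst sq_powr_nonneg) auto
  finally have A: "(r^2 + (norm z)^2) powr p \<le> (1+d)^(DIM('a)+1) * (r^2 + (norm x)^2) powr p" .
  have pos: "(r^2 + (norm z)^2) powr p > 0" using r by simp
  have "r / ((1+d)^(DIM('a)+1) * (r^2 + (norm x)^2) powr p) \<le> r / (r^2 + (norm z)^2) powr p"
    using A pos r d by (intro divide_left_mono) (auto intro!: mult_pos_pos)
  then have "(r / (r^2 + (norm x)^2) powr p) / (1+d)^(DIM('a)+1) \<le> r / (r^2 + (norm z)^2) powr p"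
    by (simp add: field_simps)
  then have "pk_const TYPE('a) * ((r / (r^2 + (norm x)^2) powr p) / (1+d)^(DIM('a)+1)) \<le> pk_const TYPE('a) * (r / (r^2 + (norm z)^2) powr p)"
    using pk_const_nonneg[where 'a='a] by (intro mult_left_mono) auto
  then show ?thesis unfolding K_formula[OF r] p_def by simp
qed

lemma K_le_near:
  fixes w :: "'a::euclidean_space"
  assumes r: "r > 0"
  shows "poisson_dil r w \<le> pk_const TYPE('a) / r^DIM('a)"
proof -
  have "r^(DIM('a)+1) = (r^2) powr ((real DIM('a) + 1)/2)" using r by (simp add: sq_powr_nonneg)
  also have "\<dots> \<le> (r^2 + (norm w)^2) powr ((real DIM('a) + 1)/2)" by (intro powr_mono2) auto
  finally have A: "r^(DIM('a)+1) \<le> (r^2 + (norm w)^2) powr ((real DIM('a) + 1)/2)" .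
  have "r / (r^2 + (norm w)^2) powr ((real DIM('a) + 1)/2) \<le> r / r^(DIM('a)+1)"
    using A r by (intro divide_left_mono) auto
  also have "\<dots> = 1 / r^DIM('a)" using r by simp
  finally show ?thesis unfolding K_formula[OF r]
    using pk_const_nonneg[where 'a='a] mult_left_mono by fastforce
qed

lemma K_le_far:
  fixes w :: "'a::euclidean_space"
  assumes r: "r > 0" and b: "b > 0" and wb: "b \<le> norm w"
  shows "poisson_dil r w \<le> pk_const TYPE('a) * r / b^(DIM('a)+1)"
proof -
  have "b^(DIM('a)+1) = (b^2) powr ((real DIM('a) + 1)/2)" using b by (simp add: sq_powr_nonneg)
  also have "\<dots> \<le> (r^2 + (norm w)^2) powr ((real DIM('a) + 1)/2)"
    using wb b by (intro powr_mono2) (auto intro!: add_increasing power_mono)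
  finally have A: "b^(DIM('a)+1) \<le> (r^2 + (norm w)^2) powr ((real DIM('a) + 1)/2)" .
  have "r / (r^2 + (norm w)^2) powr ((real DIM('a) + 1)/2) \<le> r / b^(DIM('a)+1)"
    using A r b by (intro divide_left_mono) auto
  then show ?thesis unfolding K_formula[OF r]
    using pk_const_nonneg[where 'a='a] mult_left_mono by fastforce
qed



lemma emeasure_UN_countable_le:
  assumes I: "countable I" and X: "\<And>i. i \<in> I \<Longrightarrow> X i \<in> sets M"
  shows "emeasure M (\<Union>(X ` I)) \<le> (\<integral>\<^sup>+ i. emeasure M (X i) \<partial>count_space I)"
proof -
  have U: "\<Union>(X ` I) \<in> sets M" using I X by (intro sets.countable_UN'') auto
  have "emeasure M (\<Union>(X ` I)) = (\<integral>\<^sup>+ x. indicator (\<Union>(X ` I)) x \<partial>M)"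
    using U by simp
  also have "\<dots> \<le> (\<integral>\<^sup>+ x. (\<integral>\<^sup>+ i. indicator (X i) x \<partial>count_space I) \<partial>M)"
  proof (rule nn_integral_mono)
    fix x assume "x \<in> space M"
    show "indicator (\<Union>(X ` I)) x \<le> (\<integral>\<^sup>+ i. indicator (X i) x \<partial>count_space I)"
    proof (cases "x \<in> \<Union>(X ` I)")
      case True
      then obtain j where j: "j \<in> I" "x \<in> X j" by auto
      have "indicator (X j) x \<le> (\<integral>\<^sup>+ i. indicator (X i) x \<partial>count_space I)"
        using j(1) by (rule nn_integral_ge_point)
      then show ?thesis using True j by simp
    qed simp
  qed
  also have "\<dots> = (\<integral>\<^sup>+ i. (\<integral>\<^sup>+ x. indicator (X i) x \<partial>M) \<partial>count_space I)"
    using I X by (intro nn_integral_count_space_nn_integral) auto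
  also have "\<dots> = (\<integral>\<^sup>+ i. emeasure M (X i) \<partial>count_space I)"
    using X by (intro nn_integral_cong) auto
  finally show ?thesis .
qed

definition pk_B :: "'a::euclidean_space itself \<Rightarrow> real" where
  "pk_B _ = (pk_const TYPE('a) + 1) * 2^(DIM('a)+2)"

lemma pk_B_pos: "pk_B TYPE('a::euclidean_space) > 0"
  unfolding pk_B_def using pk_const_nonneg[where 'a='a] by (intro mult_pos_pos) auto

lemma K_dyadic:
  fixes w :: "'a::euclidean_space"
  assumes r: "r > 0"
  shows "\<exists>k. norm w \<le> 2^k * r \<and> poisson_dil r w \<le> pk_const TYPE('a) * 2^(DIM('a)+1) / r^DIM('a) * (1/2^(DIM('a)+1))^k"
proof -
  define n where "n = DIM('a)"
  define c where "c = pk_const TYPE('a)"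
  have c: "c \<ge> 0" unfolding c_def by (rule pk_const_nonneg)
  have ex: "\<exists>k::nat. norm w \<le> 2^k * r"
  proof -
    obtain k :: nat where "norm w / r < 2^k" using real_arch_pow[of 2 "norm w / r"] by auto
    then have "norm w \<le> 2^k * r" using r by (simp add: field_simps)
    then show ?thesis ..
  qed
  define k where "k = (LEAST k::nat. norm w \<le> 2^k * r)"
  have kw: "norm w \<le> 2^k * r" unfolding k_def using ex by (rule LeastI_ex)
  show ?thesis
  proof (cases k)
    case 0
    have "poisson_dil r w \<le> c / r^n" unfolding c_def n_def using r by (rule K_le_near)
    also have "\<dots> \<le> c * 2^(n+1) / r^n"
    proof (rule divide_right_mono)
      have "(1::real) \<le> 2^(n+1)" by (rule one_le_power) simp
      then have "c * 1 \<le> c * 2^(n+1)" using c by (intro mult_left_mono) auto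
      then show "c \<le> c * 2^(n+1)" by simp
    qed (use r in simp)
    finally have "poisson_dil r w \<le> c * 2^(n+1) / r^n * (1/2^(n+1))^k" using 0 by simp
    then show ?thesis using kw unfolding c_def n_def by blast
  next
    case (Suc j)
    have "\<not> norm w \<le> 2^j * r" using Suc unfolding k_def
      by (metis Suc Suc_n_not_le_n k_def Least_le)
    then have wj: "2^j * r \<le> norm w" by simp
    have "poisson_dil r w \<le> c * r / (2^j * r)^(n+1)"
      unfolding c_def n_def using r wj by (intro K_le_far) auto
    also have "\<dots> = c * 2^(n+1) / r^n * (1/2^(n+1))^k"
      using r Suc by (simp add: power_mult_distrib power_divide field_simps flip: power_mult power_add)
    finally show ?thesis using kw unfolding c_def n_def by auto
  qed
qed



lemma conv_bound:
  fixes \<nu> :: "'a::euclidean_space measure" and x :: 'a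
  assumes sets: "sets \<nu> = sets borel" and L: "L \<ge> 0"
    and balls: "\<And>\<rho>. \<rho> > 0 \<Longrightarrow> emeasure \<nu> (cball x \<rho>) \<le> ennreal (L * \<rho>^DIM('a))"
    and r: "r > 0"
  shows "(\<integral>\<^sup>+ z. ennreal (poisson_dil r (x - z)) \<partial>\<nu>) \<le> ennreal (pk_B TYPE('a) * L)"
proof -
  define n where "n = DIM('a)"
  define c where "c = pk_const TYPE('a)"
  have c: "c \<ge> 0" unfolding c_def by (rule pk_const_nonneg)
  define b where "b k = c * 2^(n+1) / r^n * (1/2^(n+1))^k" for k :: nat
  have b0: "b k \<ge> 0" for k unfolding b_def using c r by simp
  have cb: "cball x R \<in> sets \<nu>" for R unfolding sets by simp
  have pw: "ennreal (poisson_dil r (x - z)) \<le> (\<Sum>k. ennreal (b k) * indicator (cball x (2^k*r)) z)" for z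
  proof -
    obtain k where k: "norm (x - z) \<le> 2^k * r" "poisson_dil r (x - z) \<le> b k"
      using K_dyadic[OF r, of "x - z"] unfolding b_def c_def n_def by blast
    have "z \<in> cball x (2^k*r)" using k(1) by (simp add: dist_norm)
    then have "ennreal (poisson_dil r (x - z)) \<le> ennreal (b k) * indicator (cball x (2^k*r)) z"
      using k(2) by (simp add: ennreal_leI)
    also have "\<dots> = (\<Sum>j\<in>{k}. ennreal (b j) * indicator (cball x (2^j*r)) z)"
      by (simp only: sum.insert[OF finite.emptyI] empty_iff sum.empty add.right_neutral not_False_eq_True)
    also have "\<dots> \<le> (\<Sum>j. ennreal (b j) * indicator (cball x (2^j*r)) z)"
      by (intro sum_le_suminf) auto
    finally show ?thesis .
  qed
  have "(\<integral>\<^sup>+ z. ennreal (poisson_dil r (x - z)) \<partial>\<nu>) \<le> (\<integral>\<^sup>+ z. (\<Sum>k. ennreal (b k) * indicator (cball x (2^k*r)) z) \<partial>\<nu>)"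
    using pw by (intro nn_integral_mono) auto
  also have "\<dots> = (\<Sum>k. (\<integral>\<^sup>+ z. ennreal (b k) * indicator (cball x (2^k*r)) z \<partial>\<nu>))"
  proof (rule nn_integral_suminf)
    fix k
    have [measurable]: "cball x (2^k*r) \<in> sets borel" by simp
    have "(\<lambda>z. ennreal (b k) * indicator (cball x (2^k*r)) z) \<in> borel_measurable borel"
      by measurable
    then show "(\<lambda>z. ennreal (b k) * indicator (cball x (2^k*r)) z) \<in> borel_measurable \<nu>"
      by (subst measurable_cong_sets[OF sets refl])
  qed
  also have "\<dots> = (\<Sum>k. ennreal (b k) * emeasure \<nu> (cball x (2^k*r)))"
    using cb by (simp add: nn_integral_cmult_indicator)
  also have "\<dots> \<le> (\<Sum>k. ennreal (c * 2^(n+1) * L * (1/2)^k))"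
  proof (intro suminf_le summableI)
    fix k
    have "emeasure \<nu> (cball x (2^k*r)) \<le> ennreal (L * (2^k*r)^n)"
      unfolding n_def using r by (intro balls) simp
    then have "ennreal (b k) * emeasure \<nu> (cball x (2^k*r)) \<le> ennreal (b k) * ennreal (L * (2^k*r)^n)"
      by (rule mult_left_mono) simp
    also have "\<dots> = ennreal (b k * (L * (2^k*r)^n))" by (rule ennreal_mult[symmetric]) (use b0 L r in auto)
    also have "b k * (L * (2^k*r)^n) = c * 2^(n+1) * L * (1/2)^k"
      unfolding b_def using r
      by (simp add: power_mult_distrib power_divide field_simps flip: power_mult power_add)
    finally show "ennreal (b k) * emeasure \<nu> (cball x (2^k*r)) \<le> ennreal (c * 2^(n+1) * L * (1/2)^k)" .
  qed
  also have "\<dots> = ennreal (\<Sum>k. c * 2^(n+1) * L * (1/2)^k)"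
    using c L by (intro suminf_ennreal2) (auto intro!: summable_mult summable_geometric)
  also have "(\<Sum>k. c * 2^(n+1) * L * (1/2::real)^k) = c * 2^(n+1) * L * 2"
    by (subst suminf_mult) (auto simp: suminf_geometric)
  also have "c * 2^(n+1) * L * 2 \<le> pk_B TYPE('a) * L"
  proof -
    have "c * 2^(n+1) * 2 = c * 2^(n+2)" by simp
    also have "\<dots> \<le> (c+1) * 2^(n+2)" by (intro mult_right_mono) auto
    finally have "(c * 2^(n+1) * 2) * L \<le> ((c+1) * 2^(n+2)) * L"
      using L by (rule mult_right_mono)
    then show ?thesis
      unfolding pk_B_def c_def[symmetric] n_def[symmetric] by (simp add: mult_ac)
  qed
  finally show ?thesis by (simp add: ennreal_leI)
qed



definition pk_MC :: "'a::euclidean_space itself \<Rightarrow> real" where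
  "pk_MC _ = unit_ball_vol (real DIM('a)) * 5^DIM('a) * pk_B TYPE('a)"

lemma pk_MC_nonneg: "pk_MC TYPE('a::euclidean_space) \<ge> 0"
  unfolding pk_MC_def using pk_B_pos[where 'a='a] by simp

lemma maximal_weak:
  fixes \<nu> :: "'a::euclidean_space measure"
  assumes sets: "sets \<nu> = sets borel" and fin: "emeasure \<nu> (space \<nu>) < \<infinity>" and s: "s > 0"
  shows "\<exists>U \<in> sets borel. {x. ennreal s < (SUP r\<in>{0<..}. \<integral>\<^sup>+ z. ennreal (poisson_dil r (x - z)) \<partial>\<nu>)} \<subseteq> U
           \<and> emeasure lborel U \<le> ennreal (pk_MC TYPE('a) / s) * emeasure \<nu> (space \<nu>)"
proof -
  define n where "n = DIM('a)"
  have n1: "n \<ge> 1" unfolding n_def by (simp add: DIM_positive Suc_le_eq)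
  define B where "B = pk_B TYPE('a)"
  have B: "B > 0" unfolding B_def by (rule pk_B_pos)
  define m where "m = enn2real (emeasure \<nu> (space \<nu>))"
  have m: "emeasure \<nu> (space \<nu>) = ennreal m" "m \<ge> 0" unfolding m_def using fin
    by (auto simp: ennreal_enn2real_if)
  define \<omega> where "\<omega> = unit_ball_vol (real n)"
  have \<omega>: "\<omega> \<ge> 0" unfolding \<omega>_def by simp
  have cb: "cball x R \<in> sets \<nu>" for x R unfolding sets by simp
  define S where "S = {x. \<exists>\<rho>>0. ennreal (s/B * \<rho>^n) < emeasure \<nu> (cball x \<rho>)}"
  have lev: "{x. ennreal s < (SUP r\<in>{0<..}. \<integral>\<^sup>+ z. ennreal (poisson_dil r (x - z)) \<partial>\<nu>)} \<subseteq> S"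
  proof
    fix x assume x: "x \<in> {x. ennreal s < (SUP r\<in>{0<..}. \<integral>\<^sup>+ z. ennreal (poisson_dil r (x - z)) \<partial>\<nu>)}"
    show "x \<in> S"
    proof (rule ccontr)
      assume "x \<notin> S"
      then have nS: "\<forall>\<rho>>0. \<not> (ennreal (s/B * \<rho>^n) < emeasure \<nu> (cball x \<rho>))"
        unfolding S_def by blast
      have balls: "emeasure \<nu> (cball x \<rho>) \<le> ennreal (s/B * \<rho>^DIM('a))" if "\<rho> > 0" for \<rho>
        using nS[rule_format, OF that] unfolding n_def by (simp only: not_less)
      have "(SUP r\<in>{0<..}. \<integral>\<^sup>+ z. ennreal (poisson_dil r (x - z)) \<partial>\<nu>) \<le> ennreal s"
      proof (rule SUP_least)
        fix r :: real assume "r \<in> {0<..}"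
        then have r: "r > 0" by simp
        have "(\<integral>\<^sup>+ z. ennreal (poisson_dil r (x - z)) \<partial>\<nu>) \<le> ennreal (pk_B TYPE('a) * (s/B))"
          using sets _ balls r by (rule conv_bound) (use s B in simp)
        also have "pk_B TYPE('a) * (s/B) = s" unfolding B_def[symmetric] using B by simp
        finally show "(\<integral>\<^sup>+ z. ennreal (poisson_dil r (x - z)) \<partial>\<nu>) \<le> ennreal s" .
      qed
      then show False using x by simp
    qed
  qed
  define rad where "rad x = (SOME \<rho>. \<rho> > 0 \<and> ennreal (s/B * \<rho>^n) < emeasure \<nu> (cball x \<rho>))" for x
  have rad: "rad x > 0 \<and> ennreal (s/B * (rad x)^n) < emeasure \<nu> (cball x (rad x))" if "x \<in> S" for x
  proof -
    have "\<exists>\<rho>. \<rho> > 0 \<and> ennreal (s/B * \<rho>^n) < emeasure \<nu> (cball x \<rho>)"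
      using that unfolding S_def by blast
    then show ?thesis unfolding rad_def by (rule someI_ex)
  qed
  have radB: "rad x \<le> max 1 (B*m/s)" if "x \<in> S" for x
  proof -
    have "ennreal (s/B * (rad x)^n) < emeasure \<nu> (cball x (rad x))" using rad[OF that] by simp
    also have "\<dots> \<le> emeasure \<nu> (space \<nu>)" by (rule emeasure_space)
    finally have lt0: "ennreal (s/B * (rad x)^n) < ennreal m" using m by simp
    have "0 \<le> s/B * (rad x)^n" using rad[OF that] s B by simp
    then have "s/B * (rad x)^n < m" using lt0 by (simp only: ennreal_less_iff)
    then have lt: "(rad x)^n < B*m/s" using s B by (simp add: field_simps)
    show ?thesis
    proof (cases "rad x \<le> 1")
      case False
      then have "rad x ^ 1 \<le> rad x ^ n" using n1 by (intro power_increasing) auto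
      then show ?thesis using lt by simp
    qed simp
  qed
  have cover: "S \<subseteq> (\<Union>i\<in>S. cball i (rad i))"
  proof
    fix x assume x: "x \<in> S"
    then have "0 \<le> rad x" using rad[OF x] by simp
    then have "x \<in> cball x (rad x)" by simp
    then show "x \<in> (\<Union>i\<in>S. cball i (rad i))" using x by blast
  qed
  obtain C where C: "countable C" "C \<subseteq> S"
      and disj: "pairwise (\<lambda>i j. disjnt (cball i (rad i)) (cball j (rad j))) C"
      and cov: "S \<subseteq> (\<Union>i\<in>C. cball i (5 * rad i))"
    using Vitali_covering_lemma_cballs[OF cover, where B="max 1 (B*m/s)"] rad radB
    by auto
  define U where "U = (\<Union>i\<in>C. cball i (5 * rad i))"
  have U: "U \<in> sets borel" unfolding U_def using C(1) by (intro sets.countable_UN'') auto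
  define K where "K = \<omega> * 5^n * B / s"
  have K: "K \<ge> 0" unfolding K_def using \<omega> B s by simp
  have "emeasure lborel U \<le> (\<integral>\<^sup>+ i. emeasure lborel (cball i (5 * rad i)) \<partial>count_space C)"
    unfolding U_def using C(1) by (intro emeasure_UN_countable_le) auto
  also have "\<dots> \<le> (\<integral>\<^sup>+ i. ennreal K * emeasure \<nu> (cball i (rad i)) \<partial>count_space C)"
  proof (rule nn_integral_mono)
    fix i assume "i \<in> space (count_space C)"
    then have i: "i \<in> S" using C(2) by auto
    have r0: "rad i > 0" using rad[OF i] by simp
    have "emeasure lborel (cball i (5 * rad i)) = ennreal (\<omega> * (5 * rad i)^n)"
      unfolding \<omega>_def n_def using r0 by (intro emeasure_cball) simp
    also have "\<omega> * (5 * rad i)^n = K * (s/B * (rad i)^n)"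
      unfolding K_def using s B by (simp add: power_mult_distrib)
    also have "ennreal (K * (s/B * (rad i)^n)) = ennreal K * ennreal (s/B * (rad i)^n)"
      by (rule ennreal_mult) (use K s B r0 in auto)
    also have "\<dots> \<le> ennreal K * emeasure \<nu> (cball i (rad i))"
      using rad[OF i] by (intro mult_left_mono) auto
    finally show "emeasure lborel (cball i (5 * rad i)) \<le> ennreal K * emeasure \<nu> (cball i (rad i))" .
  qed
  also have "\<dots> = ennreal K * (\<integral>\<^sup>+ i. emeasure \<nu> (cball i (rad i)) \<partial>count_space C)"
    by (rule nn_integral_cmult) simp
  also have "(\<integral>\<^sup>+ i. emeasure \<nu> (cball i (rad i)) \<partial>count_space C) = emeasure \<nu> (\<Union>i\<in>C. cball i (rad i))"
  proof (rule emeasure_UN_countable[symmetric])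
    show "disjoint_family_on (\<lambda>i. cball i (rad i)) C"
      using disj unfolding disjoint_family_on_def pairwise_def disjnt_def by auto
  qed (use C(1) cb in auto)
  also have "ennreal K * emeasure \<nu> (\<Union>i\<in>C. cball i (rad i)) \<le> ennreal K * emeasure \<nu> (space \<nu>)"
    by (intro mult_left_mono emeasure_space) simp
  also have "K = pk_MC TYPE('a) / s" unfolding K_def pk_MC_def \<omega>_def n_def B_def by simp
  finally have "emeasure lborel U \<le> ennreal (pk_MC TYPE('a) / s) * emeasure \<nu> (space \<nu>)" .
  moreover have "{x. ennreal s < (SUP r\<in>{0<..}. \<integral>\<^sup>+ z. ennreal (poisson_dil r (x - z)) \<partial>\<nu>)} \<subseteq> U"
    using lev cov unfolding U_def by blast
  ultimately show ?thesis using U by blast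
qed



lemma K_meas[measurable]: "(\<lambda>z. poisson_dil r (z::'a::euclidean_space)) \<in> borel_measurable borel"
  unfolding poisson_dil_def poisson_kernel_def by measurable

lemma scale_meas:
  assumes "sets V = sets (borel :: 'a::euclidean_space measure)"
  shows "(\<lambda>y::'a. t *\<^sub>R y) \<in> V \<rightarrow>\<^sub>M borel"
proof -
  have "(\<lambda>y::'a. t *\<^sub>R y) \<in> borel \<rightarrow>\<^sub>M borel" by measurable
  then show ?thesis by (subst measurable_cong_sets[OF assms refl])
qed

lemma conv_dilate:
  fixes V :: "'a::euclidean_space measure"
  assumes sets: "sets V = sets borel"
  shows "poisson_conv r (meas_dilate t V) x = (\<integral>\<^sup>+ y. ennreal (poisson_dil r (x - t *\<^sub>R y)) \<partial>V)"
  unfolding poisson_conv_def meas_dilate_def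
  by (subst nn_integral_distr) (use scale_meas[OF sets] in auto)

lemma conv_restr:
  fixes V :: "'a::euclidean_space measure"
  assumes sets: "sets V = sets borel" and A: "A \<in> sets borel"
  shows "(\<integral>\<^sup>+ z. ennreal (poisson_dil r (x - z)) \<partial>(distr (density V (indicator A)) borel (\<lambda>y. t *\<^sub>R y)))
       = (\<integral>\<^sup>+ y. indicator A y * ennreal (poisson_dil r (x - t *\<^sub>R y)) \<partial>V)"
proof -
  have sd: "sets (density V (indicator A)) = sets borel" using sets by simp
  have "(\<integral>\<^sup>+ z. ennreal (poisson_dil r (x - z)) \<partial>(distr (density V (indicator A)) borel (\<lambda>y. t *\<^sub>R y)))
      = (\<integral>\<^sup>+ y. ennreal (poisson_dil r (x - t *\<^sub>R y)) \<partial>density V (indicator A))"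
    by (subst nn_integral_distr) (use scale_meas[OF sd] in auto)
  also have "\<dots> = (\<integral>\<^sup>+ y. indicator A y * ennreal (poisson_dil r (x - t *\<^sub>R y)) \<partial>V)"
  proof (rule nn_integral_density)
    show "indicator A \<in> borel_measurable V" using A by (subst measurable_cong_sets[OF sets refl]) simp
    have "(\<lambda>y. ennreal (poisson_dil r (x - t *\<^sub>R y))) \<in> borel_measurable borel" by measurable
    then show "(\<lambda>y. ennreal (poisson_dil r (x - t *\<^sub>R y))) \<in> borel_measurable V"
      by (subst measurable_cong_sets[OF sets refl])
  qed
  finally show ?thesis .
qed

lemma mass_restr:
  fixes V :: "'a::euclidean_space measure"
  assumes sets: "sets V = sets borel" and A: "A \<in> sets borel"
  shows "emeasure (distr (density V (indicator A)) borel (\<lambda>y. t *\<^sub>R y)) (space (distr (density V (indicator A)) borel (\<lambda>y. t *\<^sub>R y))) = emeasure V A"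
proof -
  have sd: "sets (density V (indicator A)) = sets borel" using sets by simp
  have sp: "space V = UNIV" using sets_eq_imp_space_eq[OF sets] by simp
  have "emeasure (distr (density V (indicator A)) borel (\<lambda>y. t *\<^sub>R y)) (space (distr (density V (indicator A)) borel (\<lambda>y. t *\<^sub>R y)))
      = emeasure (density V (indicator A)) ((\<lambda>y. t *\<^sub>R y) -` UNIV \<inter> space (density V (indicator A)))"
    by (subst emeasure_distr) (use scale_meas[OF sd] in auto)
  also have "\<dots> = emeasure (density V (indicator A)) UNIV" using sp by simp
  also have "\<dots> = (\<integral>\<^sup>+ y. indicator A y * indicator UNIV y \<partial>V)"
  proof (rule emeasure_density)
    show "indicator A \<in> borel_measurable V" using A by (subst measurable_cong_sets[OF sets refl]) simp
    show "UNIV \<in> sets V" using sets.top[of V] sp by simp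
  qed
  also have "\<dots> = emeasure V A"
    using A sets by (simp add: nn_integral_indicator)
  finally show ?thesis .
qed

lemma lebesgue_le_lborel:
  assumes "A \<in> sets borel"
  shows "emeasure lebesgue A = emeasure lborel A"
  using assms by simp



definition err_fn :: "nat \<Rightarrow> real \<Rightarrow> real" where
  "err_fn n d = (1/(1-d)^n - 1) + (1 - 1/(1+d)^(n+1))"

lemma key_pointwise:
  fixes V :: "'a::euclidean_space measure" and x :: 'a
  assumes fin: "finite_measure V" and sets: "sets V = sets borel" and \<rho>: "\<rho> > 0" and R: "R > 0" and t: "t > 0"
    and \<delta>: "t*R/\<rho> \<le> 1/2" and x: "\<rho> \<le> norm x" and s: "s > 0"
    and big: "s < \<bar>enn2real (max_poisson (meas_dilate t V) x) - pk_C0 TYPE('a) * measure V (space V) / norm x ^ DIM('a)\<bar>"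
  shows "s/2 < (pk_C0 TYPE('a) * measure V (space V) * err_fn DIM('a) (t*R/\<rho>) + pk_C0 TYPE('a) * measure V {y. R < norm y}) / norm x ^ DIM('a)
      \<or> ennreal (s/2) < (SUP r\<in>{0<..}. \<integral>\<^sup>+ z. ennreal (poisson_dil r (x - z)) \<partial>(distr (density V (indicator {y. R < norm y})) borel (\<lambda>y. t *\<^sub>R y)))"
proof (rule ccontr)
  interpret finite_measure V by (rule fin)
  define n where "n = DIM('a)"
  define c0 where "c0 = pk_C0 TYPE('a)"
  have c0: "c0 \<ge> 0" unfolding c0_def by (rule pk_C0_nonneg)
  define m where "m = measure V (space V)"
  define d where "d = t*R/\<rho>"
  have d0: "d > 0" unfolding d_def using t R \<rho> by simp
  have d1: "d \<le> 1/2" unfolding d_def using \<delta> .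
  have sp: "space V = UNIV" using sets_eq_imp_space_eq[OF sets] by simp
  define Nset where "Nset = cball (0::'a) R"
  define Rset where "Rset = {y::'a. R < norm y}"
  have NsetB: "Nset \<in> sets V" unfolding Nset_def sets by simp
  have RsetB: "Rset \<in> sets borel" unfolding Rset_def by measurable
  have Rset_eq: "Rset = space V - Nset" unfolding Rset_def Nset_def sp by auto
  define m1 where "m1 = measure V Nset"
  define m2 where "m2 = measure V Rset"
  have m12: "m = m1 + m2" unfolding m_def m1_def m2_def Rset_eq
    using finite_measure_compl[OF NsetB] by simp
  have m1: "m1 \<ge> 0" "m2 \<ge> 0" unfolding m1_def m2_def by auto
  define X where "X = norm x ^ n"
  have xpos: "norm x > 0" using x \<rho> by linarith
  have X: "X > 0" unfolding X_def using xpos by simp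
  define \<nu> where "\<nu> = distr (density V (indicator Rset)) borel (\<lambda>y. t *\<^sub>R y)"
  define I1 where "I1 r = (\<integral>\<^sup>+ y. indicator Nset y * ennreal (poisson_dil r (x - t *\<^sub>R y)) \<partial>V)" for r
  define I2 where "I2 r = (\<integral>\<^sup>+ y. indicator Rset y * ennreal (poisson_dil r (x - t *\<^sub>R y)) \<partial>V)" for r
  define I where "I r = (\<integral>\<^sup>+ y. ennreal (poisson_dil r (x - t *\<^sub>R y)) \<partial>V)" for r
  define M where "M = max_poisson (meas_dilate t V) x"
  define T where "T = (SUP r\<in>{0<..}. \<integral>\<^sup>+ z. ennreal (poisson_dil r (x - z)) \<partial>\<nu>)"
  define N where "N = (SUP r\<in>{0<..}. I1 r)"
  have M_eq: "M = (SUP r\<in>{0<..}. I r)"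
    unfolding M_def max_poisson_def I_def conv_dilate[OF sets] ..
  have T_eq: "T = (SUP r\<in>{0<..}. I2 r)"
    unfolding T_def I2_def \<nu>_def conv_restr[OF sets RsetB] ..
  have meas: "(\<lambda>y. ennreal (poisson_dil r (x - t *\<^sub>R y))) \<in> borel_measurable V" for r
  proof -
    have "(\<lambda>y. ennreal (poisson_dil r (x - t *\<^sub>R y))) \<in> borel_measurable borel" by measurable
    then show ?thesis by (subst measurable_cong_sets[OF sets refl])
  qed
  have measN: "(\<lambda>y. indicator Nset y * ennreal (poisson_dil r (x - t *\<^sub>R y))) \<in> borel_measurable V" for r
    using meas NsetB by measurable
  have measR: "(\<lambda>y. indicator Rset y * ennreal (poisson_dil r (x - t *\<^sub>R y))) \<in> borel_measurable V" for r
  proof -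
    have "Rset \<in> sets V" using RsetB sets by simp
    then show ?thesis using meas by measurable
  qed
  have I_split: "I r = I1 r + I2 r" for r
  proof -
    have "I r = (\<integral>\<^sup>+ y. indicator Nset y * ennreal (poisson_dil r (x - t *\<^sub>R y)) + indicator Rset y * ennreal (poisson_dil r (x - t *\<^sub>R y)) \<partial>V)"
      unfolding I_def by (intro nn_integral_cong) (auto simp: Rset_eq sp split: split_indicator)
    also have "\<dots> = I1 r + I2 r" unfolding I1_def I2_def using measN measR by (rule nn_integral_add)
    finally show ?thesis .
  qed
  have M_le: "M \<le> N + T"
    unfolding M_eq T_eq N_def
  proof (rule SUP_least)
    fix r :: real assume r: "r \<in> {0<..}"
    show "I r \<le> (SUP r\<in>{0<..}. I1 r) + (SUP r\<in>{0<..}. I2 r)"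
      unfolding I_split using r by (intro add_mono SUP_upper)
  qed
  have N_le_M: "N \<le> M"
    unfolding M_eq N_def
  proof (rule SUP_mono)
    fix r :: real assume r: "r \<in> {0<..}"
    have "I1 r \<le> I r" unfolding I1_def I_def
      by (intro nn_integral_mono) (auto split: split_indicator)
    then show "\<exists>r'\<in>{0<..}. I1 r \<le> I r'" using r by blast
  qed
  define Nu where "Nu = c0 * m1 / ((1-d)^n * X)"
  define Nl where "Nl = c0 * m1 / ((1+d)^(n+1) * X)"
  have dX: "(1-d)^n * X > 0" using d1 X by simp
  have N_up: "N \<le> ennreal Nu"
    unfolding N_def
  proof (rule SUP_least)
    fix r :: real assume "r \<in> {0<..}"
    then have r: "r > 0" by simp
    have "I1 r \<le> (\<integral>\<^sup>+ y. ennreal (c0 / ((1-d)^n * X)) * indicator Nset y \<partial>V)"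
      unfolding I1_def
    proof (intro nn_integral_mono)
      fix y assume "y \<in> space V"
      show "indicator Nset y * ennreal (poisson_dil r (x - t *\<^sub>R y)) \<le> ennreal (c0 / ((1-d)^n * X)) * indicator Nset y"
      proof (cases "y \<in> Nset")
        case True
        then have "norm y \<le> R" unfolding Nset_def by simp
        then have "norm (t *\<^sub>R y) \<le> t * R" using t by (simp add: mult_left_mono)
        also have "t * R = d * \<rho>" unfolding d_def using \<rho> by simp
        also have "\<dots> \<le> d * norm x" using x d0 by (intro mult_left_mono) auto
        finally have ty: "norm (t *\<^sub>R y) \<le> d * norm x" .
        have "norm x - norm (t *\<^sub>R y) \<le> norm (x - t *\<^sub>R y)" by (rule norm_triangle_ineq2)
        then have low: "(1-d) * norm x \<le> norm (x - t *\<^sub>R y)" using ty by (simp add: algebra_simps)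
        have pos: "(1-d) * norm x > 0" using d1 xpos by simp
        then have nz: "x - t *\<^sub>R y \<noteq> 0" using low by auto
        have "poisson_dil r (x - t *\<^sub>R y) \<le> c0 / norm (x - t *\<^sub>R y) ^ n"
          unfolding c0_def n_def using r nz by (rule K_le)
        also have "\<dots> \<le> c0 / ((1-d) * norm x) ^ n"
          using c0 pos low nz by (intro divide_left_mono power_mono mult_pos_pos) auto
        also have "\<dots> = c0 / ((1-d)^n * X)" unfolding X_def by (simp add: power_mult_distrib)
        finally show ?thesis using True by (simp add: ennreal_leI)
      qed simp
    qed
    also have "\<dots> = ennreal (c0 / ((1-d)^n * X)) * emeasure V Nset"
      using NsetB by (rule nn_integral_cmult_indicator)
    also have "\<dots> = ennreal Nu"
      unfolding Nu_def m1_def emeasure_eq_measure using dX c0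
      by (simp add: ennreal_mult''[symmetric])
    finally show "I1 r \<le> ennreal Nu" .
  qed
  have N_low: "ennreal Nl \<le> N"
  proof -
    define r0 where "r0 = norm x / sqrt n"
    have r0: "r0 > 0" unfolding r0_def n_def using xpos by simp
    have "ennreal Nl = ennreal (c0 / X / (1+d)^(n+1)) * emeasure V Nset"
      unfolding Nl_def m1_def emeasure_eq_measure using X c0 d0
      by (simp add: ennreal_mult''[symmetric] field_simps)
    also have "\<dots> = (\<integral>\<^sup>+ y. ennreal (c0 / X / (1+d)^(n+1)) * indicator Nset y \<partial>V)"
      using NsetB by (rule nn_integral_cmult_indicator[symmetric])
    also have "\<dots> \<le> I1 r0"
      unfolding I1_def
    proof (intro nn_integral_mono)
      fix y assume "y \<in> space V"
      show "ennreal (c0 / X / (1+d)^(n+1)) * indicator Nset y \<le> indicator Nset y * ennreal (poisson_dil r0 (x - t *\<^sub>R y))"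
      proof (cases "y \<in> Nset")
        case True
        then have "norm y \<le> R" unfolding Nset_def by simp
        then have "norm (t *\<^sub>R y) \<le> t * R" using t by (simp add: mult_left_mono)
        also have "t * R = d * \<rho>" unfolding d_def using \<rho> by simp
        also have "\<dots> \<le> d * norm x" using x d0 by (intro mult_left_mono) auto
        finally have ty: "norm (t *\<^sub>R y) \<le> d * norm x" .
        have "norm (x - t *\<^sub>R y) \<le> norm x + norm (t *\<^sub>R y)" by (rule norm_triangle_ineq4)
        then have up: "norm (x - t *\<^sub>R y) \<le> (1 + d) * norm x" using ty by (simp add: algebra_simps)
        have "poisson_dil r0 x / (1+d)^(n+1) \<le> poisson_dil r0 (x - t *\<^sub>R y)"
          unfolding n_def using r0 _ up by (rule K_scale_lower) (use d0 in simp)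
        moreover have "poisson_dil r0 x = c0 / X"
          unfolding r0_def c0_def X_def n_def using xpos by (intro K_eq) auto
        ultimately show ?thesis using True by (simp add: ennreal_leI)
      qed simp
    qed
    also have "\<dots> \<le> N" unfolding N_def using r0 by (intro SUP_upper) auto
    finally show ?thesis .
  qed
  define \<eta> where "\<eta> = c0 * m * err_fn n d + c0 * m2"
  assume neg: "\<not> (s/2 < (pk_C0 TYPE('a) * measure V (space V) * err_fn DIM('a) (t*R/\<rho>) + pk_C0 TYPE('a) * measure V {y. R < norm y}) / norm x ^ DIM('a)
      \<or> ennreal (s/2) < (SUP r\<in>{0<..}. \<integral>\<^sup>+ z. ennreal (poisson_dil r (x - z)) \<partial>(distr (density V (indicator {y. R < norm y})) borel (\<lambda>y. t *\<^sub>R y))))"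
  then have neg1: "\<eta> / X \<le> s/2" and neg2: "T \<le> ennreal (s/2)"
    unfolding \<eta>_def c0_def m_def m2_def Rset_def d_def n_def X_def T_def \<nu>_def Rset_def by auto
  have Mfin: "M \<le> ennreal (Nu + s/2)"
  proof -
    have "M \<le> ennreal Nu + ennreal (s/2)" using M_le N_up neg2 by (meson add_mono order_trans)
    also have "\<dots> = ennreal (Nu + s/2)" using dX c0 m1 s unfolding Nu_def by (simp add: ennreal_plus)
    finally show ?thesis .
  qed
  define \<mu> where "\<mu> = enn2real M"
  have mu_up: "\<mu> \<le> Nu + s/2" unfolding \<mu>_def
    using Mfin by (rule enn2real_leI[rotated]) (use dX c0 m1 s in \<open>simp add: Nu_def\<close>)
  have mu_low: "Nl \<le> \<mu>"
  proof -
    have "ennreal Nl \<le> M" using N_low N_le_M by (rule order_trans)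
    moreover have "M < top" using Mfin by (simp add: le_less_trans)
    ultimately have "enn2real (ennreal Nl) \<le> enn2real M" by (rule enn2real_mono)
    moreover have "Nl \<ge> 0" unfolding Nl_def using c0 m1 X d0 by simp
    ultimately show ?thesis unfolding \<mu>_def by simp
  qed
  define p where "p = 1/(1-d)^n"
  define q where "q = 1/(1+d)^(n+1)"
  have p1: "p \<ge> 1" unfolding p_def using d0 d1 by (simp add: power_le_one)
  have "(1::real) \<le> (1+d)^(n+1)" using d0 by (intro one_le_power) simp
  then have q1: "q \<le> 1" "q \<ge> 0" unfolding q_def by auto
  have err: "err_fn n d = (p - 1) + (1 - q)" unfolding err_fn_def p_def q_def ..
  define A where "A = c0 / X"
  have A: "A \<ge> 0" unfolding A_def using c0 X by simp
  have Nu_eq: "Nu = A * m1 * p" unfolding Nu_def A_def p_def by (simp add: field_simps)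
  have Nl_eq: "Nl = A * m1 * q" unfolding Nl_def A_def q_def by (simp add: field_simps)
  have eta_eq: "\<eta> / X = A * m * ((p - 1) + (1 - q)) + A * m2"
    unfolding \<eta>_def A_def err using X by (simp add: field_simps)
  have cm_eq: "c0 * m / X = A * m" unfolding A_def by simp
  have F_eq: "enn2real (max_poisson (meas_dilate t V) x) - pk_C0 TYPE('a) * measure V (space V) / norm x ^ DIM('a) = \<mu> - A * m"
    using cm_eq unfolding \<mu>_def M_def c0_def m_def X_def n_def by simp
  have h1: "A * m1 * (p - 1) \<le> A * m * ((p - 1) + (1 - q))"
    using A m1 m12 p1 q1 by (intro mult_mono) auto
  have h2: "A * m1 * (1 - q) \<le> A * m * ((p - 1) + (1 - q))"
    using A m1 m12 p1 q1 by (intro mult_mono) auto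
  have h3: "A * m2 \<ge> 0" using A m1 by simp
  have "A * m = A * m1 + A * m2" using m12 by (simp add: algebra_simps)
  then have "\<bar>\<mu> - A * m\<bar> \<le> s"
    using mu_up mu_low neg1 h1 h2 h3 unfolding Nu_eq Nl_eq eta_eq
    by (simp add: algebra_simps abs_le_iff)
  then show False using big unfolding F_eq by simp
qed



lemma err_fn_nonneg:
  assumes "0 \<le> d" "d < 1"
  shows "0 \<le> err_fn n d"
proof -
  have "(1-d)^n \<le> 1" using assms by (intro power_le_one) auto
  moreover have "(1-d)^n > 0" using assms by simp
  ultimately have p: "1/(1-d)^n \<ge> 1" by simp
  have "(1::real) \<le> (1+d)^(n+1)" using assms by (intro one_le_power) simp
  then have "1/(1+d)^(n+1) \<le> 1" by simp
  then show ?thesis unfolding err_fn_def using p by simp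
qed

lemma fixed_t_bound:
  fixes V :: "'a::euclidean_space measure"
  assumes fin: "finite_measure V" and sets: "sets V = sets borel" and \<rho>: "\<rho> > 0" and R: "R > 0" and t: "t > 0"
    and \<delta>: "t*R/\<rho> \<le> 1/2"
  shows "weak_L1_norm (UNIV - ball 0 \<rho>) (\<lambda>x. enn2real (max_poisson (meas_dilate t V) x) - pk_C0 TYPE('a) * measure V (space V) / norm x ^ DIM('a))
    \<le> ennreal (2 * unit_ball_vol (real DIM('a)) * (pk_C0 TYPE('a) * measure V (space V) * err_fn DIM('a) (t*R/\<rho>) + pk_C0 TYPE('a) * measure V {y. R < norm y})
               + 2 * pk_MC TYPE('a) * measure V {y. R < norm y})"
proof -
  interpret finite_measure V by (rule fin)
  define n where "n = DIM('a)"
  define c0 where "c0 = pk_C0 TYPE('a)"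
  have c0: "c0 \<ge> 0" unfolding c0_def by (rule pk_C0_nonneg)
  define m where "m = measure V (space V)"
  define Rset where "Rset = {y::'a. R < norm y}"
  have RsetB: "Rset \<in> sets borel" unfolding Rset_def by measurable
  define m2 where "m2 = measure V Rset"
  have m2: "m2 \<ge> 0" unfolding m2_def by simp
  define \<omega> where "\<omega> = unit_ball_vol (real n)"
  have \<omega>: "\<omega> \<ge> 0" unfolding \<omega>_def by simp
  define MC where "MC = pk_MC TYPE('a)"
  have MC: "MC \<ge> 0" unfolding MC_def by (rule pk_MC_nonneg)
  define d where "d = t*R/\<rho>"
  have d0: "d > 0" unfolding d_def using t R \<rho> by simp
  have d1: "d \<le> 1/2" unfolding d_def using \<delta> .
  define \<eta> where "\<eta> = c0 * m * err_fn n d + c0 * m2"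
  have \<eta>: "\<eta> \<ge> 0" unfolding \<eta>_def using c0 m2 err_fn_nonneg[of d n] d0 d1
    by (auto intro!: add_nonneg_nonneg mult_nonneg_nonneg simp: m_def)
  define F where "F x = enn2real (max_poisson (meas_dilate t V) x) - c0 * m / norm x ^ n" for x :: 'a
  define \<nu> where "\<nu> = distr (density V (indicator Rset)) borel (\<lambda>y. t *\<^sub>R y)"
  define T where "T x = (SUP r\<in>{0<..}. \<integral>\<^sup>+ z. ennreal (poisson_dil r (x - z)) \<partial>\<nu>)" for x
  have "weak_L1_norm (UNIV - ball 0 \<rho>) F \<le> ennreal (2 * \<omega> * \<eta> + 2 * MC * m2)"
    unfolding weak_L1_norm_def
  proof (rule SUP_least)
    fix s :: real assume "s \<in> {0<..}"
    then have s: "s > 0" by simp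
    have s2: "s/2 > 0" using s by simp
    have sets\<nu>: "sets \<nu> = sets borel" unfolding \<nu>_def by simp
    have mass: "emeasure \<nu> (space \<nu>) = emeasure V Rset" unfolding \<nu>_def using sets RsetB by (rule mass_restr)
    have fin\<nu>: "emeasure \<nu> (space \<nu>) < \<infinity>" unfolding mass by (simp add: less_top[symmetric])
    obtain U where U: "U \<in> sets borel" "{x. ennreal (s/2) < T x} \<subseteq> U"
      "emeasure lborel U \<le> ennreal (MC / (s/2)) * emeasure \<nu> (space \<nu>)"
      using maximal_weak[OF sets\<nu> fin\<nu> s2] unfolding T_def MC_def by blast
    define R0 where "R0 = root n (2*\<eta>/s)"
    have n0: "n > 0" unfolding n_def by (simp add: DIM_positive)
    have R0: "R0 \<ge> 0" unfolding R0_def using \<eta> s by (intro real_root_ge_zero) simp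
    have R0n: "R0^n = 2*\<eta>/s" unfolding R0_def using n0 \<eta> s by simp
    have sub: "{x \<in> UNIV - ball 0 \<rho>. s < \<bar>F x\<bar>} \<subseteq> cball 0 R0 \<union> U"
    proof
      fix x assume xin: "x \<in> {x \<in> UNIV - ball 0 \<rho>. s < \<bar>F x\<bar>}"
      then have x: "\<rho> \<le> norm x" by (simp add: dist_norm)
      have big: "s < \<bar>enn2real (max_poisson (meas_dilate t V) x) - pk_C0 TYPE('a) * measure V (space V) / norm x ^ DIM('a)\<bar>"
        using xin unfolding F_def c0_def m_def n_def by simp
      have "s/2 < \<eta> / norm x ^ n \<or> ennreal (s/2) < T x"
        using key_pointwise[OF fin sets \<rho> R t \<delta> x s big]
        unfolding \<eta>_def T_def \<nu>_def c0_def m_def m2_def Rset_def d_def n_def .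
      then show "x \<in> cball 0 R0 \<union> U"
      proof
        assume a: "s/2 < \<eta> / norm x ^ n"
        have xpos: "norm x > 0" using x \<rho> by linarith
        then have "s/2 * norm x ^ n < \<eta>" using a by (simp add: field_simps)
        then have "norm x ^ n < R0 ^ n" unfolding R0n using s by (simp add: field_simps)
        then have "norm x < R0" using R0 by (rule power_less_imp_less_base)
        then show ?thesis by simp
      next
        assume "ennreal (s/2) < T x"
        then show ?thesis using U(2) by blast
      qed
    qed
    have "emeasure lebesgue {x \<in> UNIV - ball 0 \<rho>. s < \<bar>F x\<bar>} \<le> emeasure lebesgue (cball 0 R0 \<union> U)"
      using U(1) by (intro emeasure_mono[OF sub]) simp
    also have "\<dots> = emeasure lborel (cball 0 R0 \<union> U)" using U(1) by simp
    also have "\<dots> \<le> emeasure lborel (cball (0::'a) R0) + emeasure lborel U"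
      using Measure_Space.emeasure_subadditive[of "cball (0::'a) R0" lborel U] U(1) by simp
    also have "\<dots> \<le> ennreal (\<omega> * R0^n) + ennreal (MC / (s/2)) * ennreal m2"
    proof (rule add_mono)
      show "emeasure lborel (cball (0::'a) R0) \<le> ennreal (\<omega> * R0^n)"
        unfolding \<omega>_def n_def using R0 by (simp add: emeasure_cball)
      show "emeasure lborel U \<le> ennreal (MC / (s/2)) * ennreal m2"
        using U(3) unfolding mass m2_def emeasure_eq_measure .
    qed
    also have "\<dots> = ennreal (\<omega> * R0^n + MC / (s/2) * m2)"
    proof -
      have "ennreal (MC / (s/2)) * ennreal m2 = ennreal (MC / (s/2) * m2)"
        using m2 by (rule ennreal_mult''[symmetric])
      moreover have "ennreal (\<omega> * R0^n) + ennreal (MC / (s/2) * m2) = ennreal (\<omega> * R0^n + MC / (s/2) * m2)"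
        using \<omega> R0 MC s m2 by (intro ennreal_plus[symmetric]) auto
      ultimately show ?thesis by simp
    qed
    finally have L: "emeasure lebesgue {x \<in> UNIV - ball 0 \<rho>. s < \<bar>F x\<bar>} \<le> ennreal (\<omega> * R0^n + MC / (s/2) * m2)" .
    have "ennreal s * emeasure lebesgue {x \<in> UNIV - ball 0 \<rho>. s < \<bar>F x\<bar>} \<le> ennreal s * ennreal (\<omega> * R0^n + MC / (s/2) * m2)"
      using L by (rule mult_left_mono) simp
    also have "\<dots> = ennreal (s * (\<omega> * R0^n + MC / (s/2) * m2))"
      using s by (intro ennreal_mult'[symmetric]) simp
    also have "s * (\<omega> * R0^n + MC / (s/2) * m2) = 2 * \<omega> * \<eta> + 2 * MC * m2"
      unfolding R0n using s by (simp add: field_simps)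
    finally show "ennreal s * emeasure lebesgue {x \<in> UNIV - ball 0 \<rho>. s < \<bar>F x\<bar>} \<le> ennreal (2 * \<omega> * \<eta> + 2 * MC * m2)" .
  qed
  then show ?thesis
    unfolding F_def \<eta>_def \<omega>_def MC_def c0_def m_def m2_def Rset_def d_def n_def .
qed



theorem corollary2p5:
  fixes V :: "'a::euclidean_space measure" and \<rho> :: real
  assumes "finite_measure V"
    and "sets V = sets borel"
    and "absolutely_continuous lborel V"
    and "\<rho> > 0"
  shows "((\<lambda>t. weak_L1_norm (UNIV - ball 0 \<rho>)
            (\<lambda>x. enn2real (max_poisson (meas_dilate t V) x)
                 - pk_const TYPE('a) * real DIM('a) powr (real DIM('a) / 2)
                   / (1 + real DIM('a)) powr ((real DIM('a) + 1) / 2)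
                   * measure V (space V) / norm x ^ DIM('a)))
          \<longlongrightarrow> 0) (at_right 0)"
proof -
  note fin = assms(1) and sets = assms(2) and \<rho> = assms(4)
  interpret finite_measure V by (rule fin)
  define n where "n = DIM('a)"
  define c0 where "c0 = pk_C0 TYPE('a)"
  have c0: "c0 \<ge> 0" unfolding c0_def by (rule pk_C0_nonneg)
  define m where "m = measure V (space V)"
  have m: "m \<ge> 0" unfolding m_def by simp
  define \<omega> where "\<omega> = unit_ball_vol (real n)"
  have \<omega>: "\<omega> \<ge> 0" unfolding \<omega>_def by simp
  define MC where "MC = pk_MC TYPE('a)"
  have MC: "MC \<ge> 0" unfolding MC_def by (rule pk_MC_nonneg)
  define W where "W t = weak_L1_norm (UNIV - ball 0 \<rho>)
            (\<lambda>x. enn2real (max_poisson (meas_dilate t V) x) - pk_C0 TYPE('a) * measure V (space V) / norm x ^ DIM('a))" for t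
  have "(W \<longlongrightarrow> 0) (at_right 0)"
  proof (rule order_tendstoI)
    fix a :: ennreal assume "a < 0" then show "eventually (\<lambda>t. a < W t) (at_right 0)" by simp
  next
    fix a :: ennreal assume a: "0 < a"
    obtain b where b: "0 < b" "b < a" using dense[OF a] by blast
    then have "b < top" using top_greatest[of a] by (meson less_le_trans)
    then obtain e where e: "e \<ge> 0" "b = ennreal e" by (cases b) auto
    then have e0: "e > 0" using b by simp
    have ea: "ennreal e < a" using b e by simp
    define K where "K = \<omega> * c0 + MC"
    have K: "K \<ge> 0" unfolding K_def using \<omega> c0 MC by simp
    define \<epsilon> where "\<epsilon> = e / (4 * K + 1)"
    have \<epsilon>: "\<epsilon> > 0" unfolding \<epsilon>_def using e0 K by simp
    have K\<epsilon>: "2 * K * \<epsilon> \<le> e/2"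
    proof -
      have "2 * K * \<epsilon> = 2 * K * e / (4 * K + 1)" unfolding \<epsilon>_def by simp
      also have "\<dots> \<le> e / 2" using K e0 by (simp add: field_simps)
      finally show ?thesis .
    qed
    define A where "A k = {y::'a. real k < norm y}" for k :: nat
    have Ameas: "range A \<subseteq> sets V" unfolding A_def sets by auto
    have Adec: "decseq A" unfolding A_def decseq_def by auto
    have Aint: "(\<Inter>k. A k) = {}"
    proof -
      have "y \<notin> (\<Inter>k. A k)" for y
      proof -
        obtain k :: nat where "norm y < real k" using reals_Archimedean2 by blast
        then show ?thesis unfolding A_def using less_imp_le not_less by blast
      qed
      then show ?thesis by blast
    qed
    have "(\<lambda>k. measure V (A k)) \<longlonglongrightarrow> 0"
      using finite_Lim_measure_decseq[OF Ameas Adec] unfolding Aint by simp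
    then have "eventually (\<lambda>k. measure V (A k) < \<epsilon>) sequentially"
      using \<epsilon> by (rule order_tendstoD(2))
    then obtain k where k: "measure V (A k) < \<epsilon>" by (auto simp: eventually_sequentially)
    define R where "R = real k + 1"
    have R: "R > 0" unfolding R_def by simp
    define m2 where "m2 = measure V {y. R < norm y}"
    have m2: "m2 \<ge> 0" unfolding m2_def by simp
    have "m2 \<le> measure V (A k)" unfolding m2_def A_def R_def
      by (intro finite_measure_mono) (auto simp: sets)
    then have m2\<epsilon>: "m2 \<le> \<epsilon>" using k by simp
    define g where "g t = 2 * \<omega> * c0 * m * err_fn n (t*R/\<rho>)" for t
    have "(g \<longlongrightarrow> 2 * \<omega> * c0 * m * ((1/(1-0*R/\<rho>)^n - 1) + (1 - 1/(1+0*R/\<rho>)^(n+1)))) (at_right 0)"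
      unfolding g_def err_fn_def using \<rho> by (intro tendsto_intros) auto
    then have glim: "(g \<longlongrightarrow> 0) (at_right 0)" by simp
    have ev1: "eventually (\<lambda>t. g t < e/2) (at_right 0)"
      using glim e0 by (intro order_tendstoD(2)) auto
    have "((\<lambda>t. t*R/\<rho>) \<longlongrightarrow> 0*R/\<rho>) (at_right 0)" using \<rho> by (intro tendsto_intros) auto
    then have ev2: "eventually (\<lambda>t. t*R/\<rho> < 1/2) (at_right 0)"
      by (intro order_tendstoD(2)) auto
    have ev3: "eventually (\<lambda>t. 0 < t) (at_right (0::real))" by (rule eventually_at_right_less)
    show "eventually (\<lambda>t. W t < a) (at_right 0)"
      using ev1 ev2 ev3
    proof eventually_elim
      case (elim t)
      have "W t \<le> ennreal (2 * \<omega> * (c0 * m * err_fn n (t*R/\<rho>) + c0 * m2) + 2 * MC * m2)"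
        unfolding W_def \<omega>_def c0_def m_def m2_def MC_def n_def
        using fixed_t_bound[OF fin sets \<rho> R elim(3)] elim(2) by simp
      also have "2 * \<omega> * (c0 * m * err_fn n (t*R/\<rho>) + c0 * m2) + 2 * MC * m2 = g t + 2 * K * m2"
        unfolding g_def K_def by (simp add: algebra_simps)
      also have "\<dots> \<le> e"
      proof -
        have "2 * K * m2 \<le> 2 * K * \<epsilon>" using K m2\<epsilon> by (intro mult_left_mono) auto
        then show ?thesis using elim(1) K\<epsilon> by simp
      qed
      finally have "W t \<le> ennreal e" by (simp add: ennreal_leI)
      then show "W t < a" using ea by (rule le_less_trans)
    qed
  qed
  then show ?thesis unfolding W_def pk_C0_def .
qed

end
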